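(* Let $X$ be an infinite set of integers. For all positive integers $h$ and $k$, \[ L_{X,h}(k) \subseteq L_{X,h}(k+1). \] If moreover $\mathbf{N}_0 = \{0,1,2,\ldots\} \subseteq X$, then \[ L_{X,h}(k) \subsetneq L_{X,h}(k+1). \]
   Context: For integers $a<b$, $[a,b]=\{j\in\mathbf{Z}: a\le j\le b\}$, and $[0,0]=\{0\}$. For a set $A$ of integers and a positive integer $h$, the $h$-fold sumset is $hA=\{a_1+\cdots+a_h : a_i\in A \text{ for all } i\}$ (summands not necessarily distinct). For a nonempty finite set $A$ of integers with $0\in hA$, $\ell_h(A)$ denotes the largest integer $n\ge 0$ such that $[0,n]\subseteq hA$ (so $\ell_h(A)=0$ if $0\in hA$ but $1\notin hA$); $\ell_h(A)$ is undefined if $0\notin hA$. For a nonempty set $X$ of integers, $\mathcal{A}_X(k)=\{A\subseteq X: |A|=k\}$, and $L_{X,h}(k)=\{\ell_h(A): A\in\mathcal{A}_X(k),\ \ell_h(A)\text{ defined}\}$. *)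

theory Defs
  imports Main
begin

definition sumset :: "nat \<Rightarrow> int set \<Rightarrow> int set" where
  "sumset h A = {(\<Sum>i<h. a i) | a. \<forall>i<h. a i \<in> A}"

text \<open>ell h A: the largest n >= 0 with [0,n] contained in hA (meaningful only when 0 is in hA
  and A is finite).\<close>
definition ell :: "nat \<Rightarrow> int set \<Rightarrow> nat" where
  "ell h A = (GREATEST n. {0..int n} \<subseteq> sumset h A)"

definition Lset :: "int set \<Rightarrow> nat \<Rightarrow> nat \<Rightarrow> nat set" where
  "Lset X h k = {ell h A | A. A \<subseteq> X \<and> finite A \<and> card A = k \<and> 0 \<in> sumset h A}"

end

theory Submission
  imports Defs "HOL-Library.FuncSet"
begin

lemma sumset_img: "sumset h A = (\<lambda>a. \<Sum>i<h. a i) ` (PiE {..<h} (\<lambda>_. A))"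
proof
  show "sumset h A \<subseteq> (\<lambda>a. \<Sum>i<h. a i) ` (PiE {..<h} (\<lambda>_. A))"
  proof
    fix t assume "t \<in> sumset h A"
    then obtain a where t: "t = (\<Sum>i<h. a i)" and a: "\<forall>i<h. a i \<in> A"
      unfolding sumset_def by blast
    have "restrict a {..<h} \<in> PiE {..<h} (\<lambda>_. A)" using a by auto
    moreover have "t = (\<Sum>i<h. restrict a {..<h} i)" using t by simp
    ultimately show "t \<in> (\<lambda>a. \<Sum>i<h. a i) ` (PiE {..<h} (\<lambda>_. A))" by blast
  qed
  show "(\<lambda>a. \<Sum>i<h. a i) ` (PiE {..<h} (\<lambda>_. A)) \<subseteq> sumset h A"
    unfolding sumset_def by (auto simp: PiE_def Pi_def)
qed

lemma sumset_finite: "finite A \<Longrightarrow> finite (sumset h A)"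
  unfolding sumset_img by (auto intro: finite_PiE)

lemma sumset_card: "finite A \<Longrightarrow> card (sumset h A) \<le> card A ^ h"
proof -
  assume f: "finite A"
  have "card (sumset h A) \<le> card (PiE {..<h} (\<lambda>_. A :: int set))"
    unfolding sumset_img by (rule card_image_le) (auto intro: finite_PiE f)
  also have "\<dots> = card A ^ h" by (simp add: card_PiE)
  finally show ?thesis .
qed

lemma sumset_mono: "A \<subseteq> B \<Longrightarrow> sumset h A \<subseteq> sumset h B"
  unfolding sumset_def by blast

lemma card_le_of_interval:
  assumes "finite S" "{0..int n} \<subseteq> S" shows "n < card S"
proof -
  have "card {0..int n} \<le> card S" using assms card_mono by blast
  thus ?thesis by simp
qed

lemma ell_ge:
  assumes "finite (sumset h A)" "{0..int n} \<subseteq> sumset h A"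
  shows "n \<le> ell h A"
  unfolding ell_def
  by (rule Greatest_le_nat[where b="card (sumset h A)"])
     (use assms card_le_of_interval in \<open>auto intro: less_imp_le\<close>)

lemma ell_props:
  assumes "finite A" "0 \<in> sumset h A"
  shows "{0..int (ell h A)} \<subseteq> sumset h A \<and> int (ell h A) + 1 \<notin> sumset h A"
proof -
  let ?S = "sumset h A"
  have fin: "finite ?S" using assms sumset_finite by blast
  have P0: "{0..int 0} \<subseteq> ?S" using assms by simp
  have bd: "\<forall>y. {0..int y} \<subseteq> ?S \<longrightarrow> y \<le> card ?S"
    using fin card_le_of_interval less_imp_le by blast
  have 1: "{0..int (ell h A)} \<subseteq> ?S"
    unfolding ell_def by (rule GreatestI_nat[where P="\<lambda>n. {0..int n} \<subseteq> ?S", OF P0]) (use bd in blast)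
  show ?thesis
  proof (intro conjI 1 notI)
    assume "int (ell h A) + 1 \<in> ?S"
    then have "{0..int (Suc (ell h A))} \<subseteq> ?S" using 1
    proof (intro subsetI)
      fix t assume t: "t \<in> {0..int (Suc (ell h A))}"
      show "t \<in> ?S"
      proof (cases "t = int (ell h A) + 1")
        case True thus ?thesis using \<open>int (ell h A) + 1 \<in> ?S\<close> by simp
      next
        case False
        then have "t \<in> {0..int (ell h A)}" using t by auto
        thus ?thesis using 1 by blast
      qed
    qed
    then have "Suc (ell h A) \<le> ell h A" using ell_ge fin by blast
    thus False by simp
  qed
qed

lemma ell_eq:
  assumes "{0..int n} \<subseteq> sumset h A" "int n + 1 \<notin> sumset h A"
  shows "ell h A = n"
  unfolding ell_def
proof (rule Greatest_equality)
  show "{0..int n} \<subseteq> sumset h A" by fact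
  fix y assume y: "{0..int y} \<subseteq> sumset h A"
  show "y \<le> n"
  proof (rule ccontr)
    assume "\<not> y \<le> n"
    then have "int n + 1 \<in> {0..int y}" by auto
    thus False using y assms(2) by blast
  qed
qed

lemma sum_split_j:
  fixes a :: "nat \<Rightarrow> int"
  assumes "j < h"
  shows "(\<Sum>i<h. a i) = a j + (\<Sum>i\<in>{..<h}-{j}. a i)"
  using assms by (simp add: sum.remove)

lemma part1:
  fixes X :: "int set" and h k :: nat
  assumes "infinite X" and "h \<ge> 1" and "k \<ge> 1"
  shows "Lset X h k \<subseteq> Lset X h (k + 1)"
proof
  fix m assume "m \<in> Lset X h k"
  then obtain A where m: "m = ell h A" and AX: "A \<subseteq> X" and fA: "finite A"
    and cA: "card A = k" and z: "0 \<in> sumset h A"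
    unfolding Lset_def by blast
  define n where "n = ell h A"
  have pr: "{0..int n} \<subseteq> sumset h A" "int n + 1 \<notin> sumset h A"
    using ell_props[OF fA z] n_def by auto
  define B where "B = (\<Sum>a\<in>A. \<bar>a\<bar>)"
  have aB: "\<And>a. a \<in> A \<Longrightarrow> \<bar>a\<bar> \<le> B"
    unfolding B_def using fA by (intro member_le_sum[where f=abs]) auto
  have B0: "B \<ge> 0" unfolding B_def by (simp add: sum_nonneg)
  define N where "N = int h * B + int n + 2"
  have "\<not> X \<subseteq> {-N..N}" using assms(1) finite_subset by blast
  then obtain x where xX: "x \<in> X" and "x \<notin> {-N..N}" by blast
  then have xN: "\<bar>x\<bar> > N" by (simp add: abs_if) linarith
  have hB: "int h * B \<ge> B" using B0 assms(2)
    by (metis mult_1 mult_right_mono of_nat_1 of_nat_mono)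
  have xA: "x \<notin> A"
  proof
    assume "x \<in> A"
    then have "\<bar>x\<bar> \<le> B" by (rule aB)
    thus False using xN hB unfolding N_def by linarith
  qed
  let ?A = "insert x A"
  have key: "t \<in> sumset h A" if t: "t \<in> sumset h ?A" "0 \<le> t" "t \<le> int n + 1" for t
  proof -
    obtain a where ta: "t = (\<Sum>i<h. a i)" and a: "\<forall>i<h. a i \<in> ?A"
      using t(1) unfolding sumset_def by blast
    show ?thesis
    proof (cases "\<forall>i<h. a i \<in> A")
      case True thus ?thesis using ta unfolding sumset_def by blast
    next
      case False
      then obtain j where j: "j < h" "a j = x" using a by auto
      have spl: "t = x + (\<Sum>i\<in>{..<h}-{j}. a i)" using ta sum_split_j[OF j(1)] j by simp
      have cd: "card ({..<h}-{j}) \<le> h"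
        using card_mono[of "{..<h}" "{..<h}-{j}"] by simp
      show ?thesis
      proof (cases "x > 0")
        case True
        have "(\<Sum>i\<in>{..<h}-{j}. (-B)) \<le> (\<Sum>i\<in>{..<h}-{j}. a i)"
        proof (rule sum_mono)
          fix i assume "i \<in> {..<h}-{j}"
          then have "a i \<in> ?A" using a by auto
          then show "-B \<le> a i" using aB True B0 xN unfolding N_def by fastforce
        qed
        moreover have "(\<Sum>i\<in>{..<h}-{j}. (-B)) \<ge> - (int h * B)"
          using cd B0 by (simp add: mult_right_mono)
        ultimately have "t \<ge> x - int h * B" using spl by linarith
        then show ?thesis using t True xN unfolding N_def by linarith
      next
        case False
        have "(\<Sum>i\<in>{..<h}-{j}. a i) \<le> (\<Sum>i\<in>{..<h}-{j}. B)"
        proof (rule sum_mono)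
          fix i assume "i \<in> {..<h}-{j}"
          then have "a i \<in> ?A" using a by auto
          then show "a i \<le> B" using aB False B0 xN unfolding N_def by fastforce
        qed
        moreover have "(\<Sum>i\<in>{..<h}-{j}. B) \<le> int h * B"
          using cd B0 by (simp add: mult_right_mono)
        ultimately have "t \<le> x + int h * B" using spl by linarith
        then show ?thesis using t False xN unfolding N_def by linarith
      qed
    qed
  qed
  have sub: "sumset h A \<subseteq> sumset h ?A" by (rule sumset_mono) auto
  have "ell h ?A = n"
    by (rule ell_eq) (use pr sub key in auto)
  moreover have "card ?A = k + 1" using fA xA cA by simp
  ultimately show "m \<in> Lset X h (k + 1)"
    unfolding Lset_def using m n_def AX xX fA z sub
    by (intro CollectI exI[of _ ?A]) auto
qed

theorem mainTheorem1:
  fixes X :: "int set" and h k :: nat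
  assumes "infinite X" and "h \<ge> 1" and "k \<ge> 1"
  shows "Lset X h k \<subseteq> Lset X h (k + 1) \<and>
         ({0..} \<subseteq> X \<longrightarrow> Lset X h k \<subset> Lset X h (k + 1))"
proof (intro conjI impI)
  show P1: "Lset X h k \<subseteq> Lset X h (k + 1)" using part1 assms by blast
  assume N0: "{0..} \<subseteq> X"
  have bd: "Lset X h k \<subseteq> {..k^h}"
  proof
    fix m assume "m \<in> Lset X h k"
    then obtain A where m: "m = ell h A" and fA: "finite A"
      and cA: "card A = k" and z: "0 \<in> sumset h A"
      unfolding Lset_def by blast
    have "m < card (sumset h A)"
      using card_le_of_interval ell_props[OF fA z] sumset_finite[OF fA] m by blast
    then show "m \<in> {..k^h}" using sumset_card[OF fA, of h] cA by simp
  qed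
  have fin: "finite (Lset X h k)" using bd finite_subset by blast
  have ne: "ell h {0..<int k} \<in> Lset X h k"
  proof -
    have "0 \<in> sumset h {0..<int k}" unfolding sumset_def using assms(3)
      by (auto intro!: exI[of _ "\<lambda>_. 0"])
    moreover have "{0..<int k} \<subseteq> X" using N0 by auto
    ultimately show ?thesis unfolding Lset_def by force
  qed
  define m where "m = Max (Lset X h k)"
  have "m \<in> Lset X h k" unfolding m_def using fin ne Max_in by blast
  then obtain A where m: "m = ell h A" and AX: "A \<subseteq> X" and fA: "finite A"
    and cA: "card A = k" and z: "0 \<in> sumset h A"
    unfolding Lset_def by blast
  have pr: "{0..int m} \<subseteq> sumset h A" "int m + 1 \<notin> sumset h A"
    using ell_props[OF fA z] m by auto
  obtain a where a0: "(\<Sum>i<h. a i) = 0" and a: "\<forall>i<h. a i \<in> A"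
    using z unfolding sumset_def by auto
  obtain j where j: "j < h" "\<forall>i<h. a i \<le> a j"
  proof -
    have "0 \<in> {..<h}" using assms(2) by simp
    then have ne: "a ` {..<h} \<noteq> {}" by blast
    have "Max (a ` {..<h}) \<in> a ` {..<h}" using ne by (intro Max_in) auto
    then obtain j where "j < h" "a j = Max (a ` {..<h})" by auto
    moreover have "\<forall>i<h. a i \<le> Max (a ` {..<h})" by auto
    ultimately show ?thesis using that by metis
  qed
  have "(\<Sum>i<h. a i) \<le> (\<Sum>i<h. a j)" using j by (intro sum_mono) auto
  then have "0 \<le> int h * a j" using a0 by simp
  then have aj0: "a j \<ge> 0" using assms(2) by (simp add: zero_le_mult_iff)
  define x where "x = int m + 1 + a j"
  define b where "b = a(j := x)"
  have sb: "(\<Sum>i<h. b i) = int m + 1"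
  proof -
    have "(\<Sum>i<h. b i) = b j + (\<Sum>i\<in>{..<h}-{j}. b i)" by (rule sum_split_j[OF j(1)])
    also have "(\<Sum>i\<in>{..<h}-{j}. b i) = (\<Sum>i\<in>{..<h}-{j}. a i)"
      unfolding b_def by (rule sum.cong) auto
    finally show ?thesis using sum_split_j[OF j(1), of a] a0 unfolding b_def x_def by simp
  qed
  have xA: "x \<notin> A"
  proof
    assume "x \<in> A"
    then have "\<forall>i<h. b i \<in> A" using a unfolding b_def by auto
    then have "int m + 1 \<in> sumset h A" unfolding sumset_def
      by (intro CollectI exI[of _ b]) (use sb in simp)
    thus False using pr by blast
  qed
  let ?A = "insert x A"
  have xX: "x \<in> X" using N0 aj0 unfolding x_def by auto
  have sub: "sumset h A \<subseteq> sumset h ?A" by (rule sumset_mono) auto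
  have "int m + 1 \<in> sumset h ?A" using sb a unfolding sumset_def b_def
    by (auto intro!: exI[of _ "a(j := x)"])
  then have "{0..int (Suc m)} \<subseteq> sumset h ?A"
  proof (intro subsetI)
    fix t assume t: "t \<in> {0..int (Suc m)}" and mm: "int m + 1 \<in> sumset h ?A"
    show "t \<in> sumset h ?A"
    proof (cases "t = int m + 1")
      case True thus ?thesis using mm by simp
    next
      case False
      then have "t \<in> {0..int m}" using t by auto
      thus ?thesis using pr sub by blast
    qed
  qed
  then have ge: "Suc m \<le> ell h ?A" using ell_ge sumset_finite fA by blast
  have inL: "ell h ?A \<in> Lset X h (k+1)"
    unfolding Lset_def using fA xA cA AX xX z sub by auto
  have "ell h ?A \<notin> Lset X h k"
  proof
    assume "ell h ?A \<in> Lset X h k"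
    then have "ell h ?A \<le> m" unfolding m_def using fin by simp
    thus False using ge by simp
  qed
  then show "Lset X h k \<subset> Lset X h (k + 1)" using P1 inL by blast
qed

end
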